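(* Let $h\colon\mathbb{R}^p\to\mathbb{R}$ satisfy $\mathbb{E}\bigl(|h(\theta)|\bigr)<\infty$. Then for $f_S$-almost all $s^*\in\mathbb{R}^q$ and all $\delta>0$, $n\in\mathbb{N}$, $$\mathbb{E}\bigl(h(\theta)\mid S=s^*\bigr)=\frac{\phi_h(s^* )}{\phi_1(s^* )}\quad\text{and}\quad \mathbb{E}\bigl(Y^{(\delta)}_n\bigr)=\mathbb{E}\bigl(h(\theta^{(\delta)}_1)\bigr)=\frac{\phi^{(\delta)}_h(s^* )}{\phi^{(\delta)}_1(s^* )}.$$
   Context: Let $p,q\ge1$. Let $(\theta,S)$ be a random vector in $\mathbb{R}^p\times\mathbb{R}^q$ with joint Lebesgue density $f_{S,\theta}(s,t)$, marginals $f_S(s)=\int f_{S,\theta}(s,t)\,dt$, $f_\theta(t)=\int f_{S,\theta}(s,t)\,ds$, and conditional density $f_{\theta|S}(t\mid s)=f_{S,\theta}(s,t)/f_S(s)$ if $f_S(s)>0$, $0$ otherwise; conditional expectations given $S=s$ use this density. ABC algorithm: given $s^*$, $\delta>0$, $n\in\mathbb{N}$, repeatedly draw independent pairs $(\theta,S)$ from the joint distribution, accepting $\theta$ whenever $\|S-s^*\|\le\delta$ (Euclidean norm), until $n$ values $\theta^{(\delta)}_1,\dots,\theta^{(\delta)}_n$ are accepted; $Y^{(\delta)}_n=\frac1n\sum_{j=1}^n h(\theta^{(\delta)}_j)$. For $h$ with $\mathbb{E}|h(\theta)|<\infty$ define $\phi_h(s)=\int_{\mathbb{R}^p}h(t)f_{S,\theta}(s,t)\,dt$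 and $\phi^{(\delta)}_h(s^* )=\frac{1}{|B(s^*,\delta)|}\int_{B(s^*,\delta)}\phi_h(s)\,ds$, where $B(s^*,\delta)$ is the closed Euclidean ball of radius $\delta$ about $s^*$ and $|B(s^*,\delta)|$ its volume; $\phi_1$ denotes $\phi_h$ for $h\equiv1$ (so $\phi_1=f_S$). *)

theory Defs
  imports "HOL-Probability.Probability"
begin

text \<open>Joint density f s t of (S, theta); s in R^q (type 'b), t in R^p (type 'a).\<close>

definition f_S :: "('b::euclidean_space \<Rightarrow> 'a::euclidean_space \<Rightarrow> real) \<Rightarrow> 'b \<Rightarrow> real" where
  "f_S f s = (\<integral>t. f s t \<partial>lborel)"

definition cond_dens :: "('b::euclidean_space \<Rightarrow> 'a::euclidean_space \<Rightarrow> real) \<Rightarrow> 'a \<Rightarrow> 'b \<Rightarrow> real" where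
  "cond_dens f t s = (if f_S f s > 0 then f s t / f_S f s else 0)"

definition cond_exp :: "('b::euclidean_space \<Rightarrow> 'a::euclidean_space \<Rightarrow> real) \<Rightarrow> ('a \<Rightarrow> real) \<Rightarrow> 'b \<Rightarrow> real" where
  "cond_exp f h s = (\<integral>t. h t * cond_dens f t s \<partial>lborel)"

definition phi :: "('b::euclidean_space \<Rightarrow> 'a::euclidean_space \<Rightarrow> real) \<Rightarrow> ('a \<Rightarrow> real) \<Rightarrow> 'b \<Rightarrow> real" where
  "phi f h s = (\<integral>t. h t * f s t \<partial>lborel)"

definition phi_delta :: "('b::euclidean_space \<Rightarrow> 'a::euclidean_space \<Rightarrow> real) \<Rightarrow> ('a \<Rightarrow> real) \<Rightarrow> 'b \<Rightarrow> real \<Rightarrow> real" where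
  "phi_delta f h s\<^sub>0 \<delta> = (LINT s:cball s\<^sub>0 \<delta>|lborel. phi f h s) / measure lborel (cball s\<^sub>0 \<delta>)"

text \<open>ABC rejection sampler driven by an i.i.d. sequence X i = (S_i, theta_i):
  the indices of accepted draws, the j-th accepted value (0-based, so theta_abc .. j
  is theta^(delta)_(j+1) of the paper), and the average Y_n.\<close>
definition acc_set :: "(nat \<Rightarrow> 'm \<Rightarrow> 'b::euclidean_space \<times> 'a) \<Rightarrow> 'b \<Rightarrow> real \<Rightarrow> 'm \<Rightarrow> nat set" where
  "acc_set X s\<^sub>0 \<delta> \<omega> = {i. norm (fst (X i \<omega>) - s\<^sub>0) \<le> \<delta>}"

definition theta_abc :: "(nat \<Rightarrow> 'm \<Rightarrow> 'b::euclidean_space \<times> 'a) \<Rightarrow> 'b \<Rightarrow> real \<Rightarrow> nat \<Rightarrow> 'm \<Rightarrow> 'a" where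
  "theta_abc X s\<^sub>0 \<delta> j \<omega> = snd (X (enumerate (acc_set X s\<^sub>0 \<delta> \<omega>) j) \<omega>)"

definition Y_abc :: "(nat \<Rightarrow> 'm \<Rightarrow> 'b::euclidean_space \<times> 'a) \<Rightarrow> ('a \<Rightarrow> real) \<Rightarrow> 'b \<Rightarrow> real \<Rightarrow> nat \<Rightarrow> 'm \<Rightarrow> real" where
  "Y_abc X h s\<^sub>0 \<delta> n \<omega> = (\<Sum>j<n. h (theta_abc X s\<^sub>0 \<delta> j \<omega>)) / real n"

end

theory Submission
  imports Defs
begin


lemma card_below_enumerate:
  fixes S :: "nat set" assumes S: "infinite S"
  shows "card {k. k < enumerate S m \<and> k \<in> S} = m"
proof -
  have "{k. k < enumerate S m \<and> k \<in> S} = enumerate S ` {..<m}"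
  proof safe
    fix k assume k: "k < enumerate S m" "k \<in> S"
    then obtain m' where m': "enumerate S m' = k" using enumerate_Ex[OF S] by blast
    with k S have "m' < m" by (metis enumerate_mono_iff)
    then show "k \<in> enumerate S ` {..<m}" using m' by auto
  next
    fix m' assume "m' < m"
    then show "enumerate S m' < enumerate S m" "enumerate S m' \<in> S"
      using S by (auto intro: enumerate_in_set)
  qed
  moreover have "inj_on (enumerate S) {..<m}" using inj_enumerate[OF S] by (auto intro: inj_on_subset)
  ultimately show ?thesis by (simp add: card_image)
qed

lemma enumerate_eq_iff:
  fixes S :: "nat set" assumes S: "infinite S"
  shows "enumerate S j = i \<longleftrightarrow> i \<in> S \<and> card {k. k < i \<and> k \<in> S} = j"
proof
  assume "enumerate S j = i" then show "i \<in> S \<and> card {k. k < i \<and> k \<in> S} = j"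
    using S card_below_enumerate[OF S, of j] enumerate_in_set[OF S] by auto
next
  assume "i \<in> S \<and> card {k. k < i \<and> k \<in> S} = j"
  moreover then obtain m where "enumerate S m = i" using enumerate_Ex[OF S] by blast
  ultimately show "enumerate S j = i" using card_below_enumerate[OF S, of m] by auto
qed

lemma measurable_enumerate:
  fixes A :: "'a \<Rightarrow> nat set"
  assumes "\<And>i. {\<omega>\<in>space M. i \<in> A \<omega>} \<in> sets M"
  shows "(\<lambda>\<omega>. enumerate (A \<omega>) j) \<in> measurable M (count_space UNIV)"
  using assms
proof (induction j arbitrary: A)
  case 0
  have P0: "Measurable.pred M (\<lambda>\<omega>. i \<in> A \<omega>)" for i using 0[of i] by (simp add: pred_def)
  show ?case unfolding enumerate_0 by (rule measurable_Least, rule P0)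
next
  case (Suc j)
  have P0[measurable]: "Measurable.pred M (\<lambda>\<omega>. i \<in> A \<omega>)" for i using Suc.prems[of i] by (simp add: pred_def)
  have L[measurable]: "(\<lambda>\<omega>. LEAST n. n \<in> A \<omega>) \<in> measurable M (count_space UNIV)" by (rule measurable_Least, rule P0)
  have "Measurable.pred M (\<lambda>\<omega>. i \<in> A \<omega> - {LEAST n. n \<in> A \<omega>})" for i
    by measurable
  then have "{\<omega>\<in>space M. i \<in> A \<omega> - {LEAST n. n \<in> A \<omega>}} \<in> sets M" for i by (simp add: pred_def)
  from Suc.IH[OF this] show ?case unfolding enumerate_Suc .
qed

lemma AE_pos_cball:
  fixes \<nu> :: "'b::euclidean_space measure"
  assumes sets: "sets \<nu> = sets borel"
  shows "AE s in \<nu>. \<forall>\<delta>>0. emeasure \<nu> (cball s \<delta>) > 0"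
proof -
  obtain D :: "'b set" where D: "countable D" "\<And>X. open X \<Longrightarrow> X \<noteq> {} \<Longrightarrow> \<exists>d \<in> D. d \<in> X"
    using countable_dense_setE by blast
  define I where "I = {(d,r). d \<in> D \<and> r \<in> \<rat> \<and> emeasure \<nu> (ball d r) = 0}"
  have "I \<subseteq> D \<times> \<rat>" by (auto simp: I_def)
  then have cI: "countable I" using D(1) countable_rat by (meson countable_SIGMA countable_subset)
  have N: "(\<Union>(d,r)\<in>I. ball d r) \<in> null_sets \<nu>"
    using cI by (intro null_sets_UN') (auto simp: I_def null_sets_def sets)
  show ?thesis
  proof (rule AE_I'[OF N], rule subsetI)
    fix s assume "s \<in> {x \<in> space \<nu>. \<not> (\<forall>\<delta>>0. 0 < emeasure \<nu> (cball x \<delta>))}"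
    then obtain \<delta> :: real where d: "0 < \<delta>" and z: "\<not> 0 < emeasure \<nu> (cball s \<delta>)" by auto
    then have z0: "emeasure \<nu> (cball s \<delta>) = 0" by (simp add: not_gr_zero)
    obtain d where dD: "d \<in> D" "d \<in> ball s (\<delta>/3)" using D(2)[of "ball s (\<delta>/3)"] d by auto
    obtain r where r: "r \<in> \<rat>" "\<delta>/3 < r" "r < 2*\<delta>/3" using Rats_dense_in_real[of "\<delta>/3" "2*\<delta>/3"] d by auto
    have sub: "ball d r \<subseteq> cball s \<delta>"
    proof
      fix y assume "y \<in> ball d r"
      then have "dist d y < r" by simp
      moreover have "dist s d < \<delta>/3" using dD by simp
      ultimately have "dist s y < \<delta>" using dist_triangle[of s y d] r by linarith
      then show "y \<in> cball s \<delta>" by simp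
    qed
    have "emeasure \<nu> (ball d r) \<le> emeasure \<nu> (cball s \<delta>)"
      by (rule emeasure_mono[OF sub]) (simp add: sets)
    then have "emeasure \<nu> (ball d r) = 0" using z0 by simp
    then have "(d, r) \<in> I" using dD r by (auto simp: I_def)
    moreover have "s \<in> ball d r" using dD r by (simp add: dist_commute)
    ultimately show "s \<in> (\<Union>(d,r)\<in>I. ball d r)" by (auto intro!: bexI[of _ "(d,r)"])
  qed
qed



lemma real_card_lessThan_filter:
  "real (card {k. k < (i::nat) \<and> P k}) = (\<Sum>k<i. if P k then 1 else 0)"
proof -
  have "{k. k < i \<and> P k} = {..<i} \<inter> {k. P k}" by auto
  then show ?thesis using sum.If_cases[of "{..<i}" P "\<lambda>_. 1::real" "\<lambda>_. 0"] by simp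
qed

locale abc = prob_space M for M :: "'a measure" +
  fixes X :: "nat \<Rightarrow> 'a \<Rightarrow> 'c::euclidean_space" and E :: "'c set"
  assumes ind: "indep_vars (\<lambda>_. borel) X UNIV"
    and idd: "\<And>i. distr M borel (X i) = distr M borel (X 0)"
    and E[measurable]: "E \<in> sets borel"
    and ppos: "0 < prob {\<omega>\<in>space M. X 0 \<omega> \<in> E}"
begin

lemma rv[measurable]: "X i \<in> borel_measurable M"
  using ind unfolding indep_vars_def2 by auto

definition "p = prob {\<omega>\<in>space M. X 0 \<omega> \<in> E}"

lemma prob_Xi: "prob {\<omega>\<in>space M. X i \<omega> \<in> E} = p"
proof -
  have "prob {\<omega>\<in>space M. X i \<omega> \<in> E} = measure (distr M borel (X i)) E"
    by (subst measure_distr) (auto intro!: arg_cong[where f=prob])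
  also have "\<dots> = measure (distr M borel (X 0)) E" by (simp add: idd[of i])
  also have "\<dots> = p" unfolding p_def
    by (subst measure_distr) (auto intro!: arg_cong[where f=prob])
  finally show ?thesis .
qed

lemma transfer:
  fixes g :: "'c \<Rightarrow> real"
  assumes [measurable]: "g \<in> borel_measurable borel"
  shows "integrable M (\<lambda>\<omega>. g (X i \<omega>)) \<longleftrightarrow> integrable M (\<lambda>\<omega>. g (X 0 \<omega>))"
    and "(\<integral>\<omega>. g (X i \<omega>) \<partial>M) = (\<integral>\<omega>. g (X 0 \<omega>) \<partial>M)"
proof -
  show "integrable M (\<lambda>\<omega>. g (X i \<omega>)) \<longleftrightarrow> integrable M (\<lambda>\<omega>. g (X 0 \<omega>))"
    using integrable_distr_eq[of "X i" M borel g] integrable_distr_eq[of "X 0" M borel g] idd[of i]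
    by simp
  show "(\<integral>\<omega>. g (X i \<omega>) \<partial>M) = (\<integral>\<omega>. g (X 0 \<omega>) \<partial>M)"
    using integral_distr[of "X i" M borel g] integral_distr[of "X 0" M borel g] idd[of i]
    by simp
qed

lemma indep_block:
  "indep_var (PiM {..<i} (\<lambda>_. borel)) (\<lambda>\<omega>. restrict (\<lambda>k. X k \<omega>) {..<i})
             (PiM {i} (\<lambda>_. borel)) (\<lambda>\<omega>. restrict (\<lambda>k. X k \<omega>) {i})"
proof -
  let ?K = "case_bool {..<i} {i}"
  have "disjoint_family_on ?K UNIV"
    by (auto simp: disjoint_family_on_def split: bool.split)
  from indep_vars_restrict[OF ind _ this]
  have *: "indep_vars (\<lambda>j. PiM (?K j) (\<lambda>_. borel)) (\<lambda>j \<omega>. restrict (\<lambda>k. X k \<omega>) (?K j)) UNIV"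
    by simp
  have e1: "(\<lambda>j. PiM (?K j) (\<lambda>_. borel)) = case_bool (PiM {..<i} (\<lambda>_. borel)) (PiM {i} (\<lambda>_. borel))"
    by (rule ext) (simp split: bool.split)
  have e2: "(\<lambda>j \<omega>. restrict (\<lambda>k. X k \<omega>) (?K j)) =
      case_bool (\<lambda>\<omega>. restrict (\<lambda>k. X k \<omega>) {..<i}) (\<lambda>\<omega>. restrict (\<lambda>k. X k \<omega>) {i})"
    by (rule ext) (simp split: bool.split)
  show ?thesis using * unfolding indep_var_def e1 e2 .
qed

lemma indep_integral:
  fixes Z :: "(nat \<Rightarrow> 'c) \<Rightarrow> real" and W :: "'c \<Rightarrow> real"
  assumes Z[measurable]: "Z \<in> borel_measurable (PiM {..<i} (\<lambda>_. borel))"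
    and W[measurable]: "W \<in> borel_measurable borel"
    and iZ: "integrable M (\<lambda>\<omega>. Z (restrict (\<lambda>k. X k \<omega>) {..<i}))"
    and iW: "integrable M (\<lambda>\<omega>. W (X i \<omega>))"
  shows "(\<integral>\<omega>. Z (restrict (\<lambda>k. X k \<omega>) {..<i}) * W (X i \<omega>) \<partial>M) =
         (\<integral>\<omega>. Z (restrict (\<lambda>k. X k \<omega>) {..<i}) \<partial>M) * (\<integral>\<omega>. W (X i \<omega>) \<partial>M)"
    and "integrable M (\<lambda>\<omega>. Z (restrict (\<lambda>k. X k \<omega>) {..<i}) * W (X i \<omega>))"
proof -
  have W': "(\<lambda>y. W (y i)) \<in> borel_measurable (PiM {i} (\<lambda>_. borel))" by measurable
  have I: "indep_var borel (\<lambda>\<omega>. Z (restrict (\<lambda>k. X k \<omega>) {..<i})) borel (\<lambda>\<omega>. W (X i \<omega>))"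
    using indep_var_compose[OF indep_block Z W'] by (simp add: comp_def)
  show "(\<integral>\<omega>. Z (restrict (\<lambda>k. X k \<omega>) {..<i}) * W (X i \<omega>) \<partial>M) =
         (\<integral>\<omega>. Z (restrict (\<lambda>k. X k \<omega>) {..<i}) \<partial>M) * (\<integral>\<omega>. W (X i \<omega>) \<partial>M)"
    by (rule indep_var_lebesgue_integral[OF I iZ iW])
  show "integrable M (\<lambda>\<omega>. Z (restrict (\<lambda>k. X k \<omega>) {..<i}) * W (X i \<omega>))"
    by (rule indep_var_integrable[OF I iZ iW])
qed

lemma AE_infinite: "AE \<omega> in M. infinite {i. X i \<omega> \<in> E}"
proof -
  define S where "S m = {\<omega>\<in>space M. \<forall>k. m \<le> k \<longrightarrow> X k \<omega> \<notin> E}" for m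
  have Sev[measurable]: "S m \<in> events" for m unfolding S_def by measurable
  have p1: "p \<le> 1" unfolding p_def by simp
  have S0: "prob (S m) = 0" for m
  proof -
    have le: "prob (S m) \<le> (1 - p) ^ Suc L" for L
    proof -
      define J where "J = {m..<m + Suc L}"
      define A where "A k = X k -` (- E) \<inter> space M" for k
      have "indep_sets (\<lambda>i. {X i -` A \<inter> space M | A. A \<in> sets borel}) UNIV"
        using ind unfolding indep_vars_def2 by simp
      moreover have "\<forall>k\<in>J. A k \<in> {X k -` B \<inter> space M | B. B \<in> sets borel}"
        unfolding A_def using borel_comp[OF E] by blast
      ultimately have "prob (\<Inter>k\<in>J. A k) = (\<Prod>k\<in>J. prob (A k))"
        by (intro indep_setsD) (auto simp: J_def)
      also have "\<dots> = (\<Prod>k\<in>J. 1 - p)"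
      proof (rule prod.cong[OF refl])
        fix k
        have "A k = space M - {\<omega>\<in>space M. X k \<omega> \<in> E}" by (auto simp: A_def)
        then show "prob (A k) = 1 - p"
          using prob_compl[of "{\<omega>\<in>space M. X k \<omega> \<in> E}"] prob_Xi[of k] by simp
      qed
      also have "\<dots> = (1 - p) ^ Suc L" by (simp add: J_def)
      finally have eq: "prob (\<Inter>k\<in>J. A k) = (1 - p) ^ Suc L" .
      have "S m \<subseteq> (\<Inter>k\<in>J. A k)" by (auto simp: S_def J_def A_def)
      moreover have "(\<Inter>k\<in>J. A k) \<in> events" unfolding A_def J_def by measurable
      ultimately have "prob (S m) \<le> prob (\<Inter>k\<in>J. A k)" by (intro finite_measure_mono) auto
      then show ?thesis using eq by simp
    qed
    have "(\<lambda>L. (1 - p) ^ Suc L) \<longlonglongrightarrow> 0"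
      using ppos p1 unfolding p_def[symmetric]
      by (intro LIMSEQ_Suc LIMSEQ_power_zero) auto
    then have "prob (S m) \<le> 0" using le by (intro LIMSEQ_le_const) auto
    then show ?thesis by (simp add: measure_le_0_iff)
  qed
  have N: "(\<Union>m. S m) \<in> null_sets M"
    using S0 by (intro null_sets_UN) (auto simp: null_sets_def emeasure_eq_measure)
  show ?thesis
  proof (rule AE_I'[OF N], rule subsetI)
    fix \<omega> assume "\<omega> \<in> {\<omega> \<in> space M. \<not> infinite {i. X i \<omega> \<in> E}}"
    then have \<omega>: "\<omega> \<in> space M" "finite {i. X i \<omega> \<in> E}" by auto
    then obtain m where "\<forall>k\<in>{i. X i \<omega> \<in> E}. k < m" using finite_nat_set_iff_bounded by blast
    then have "\<omega> \<in> S m" using \<omega> by (auto simp: S_def)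
    then show "\<omega> \<in> (\<Union>m. S m)" by blast
  qed
qed

end


context abc begin

definition "N i \<omega> = card {k. k < i \<and> X k \<omega> \<in> E}"
definition "T j \<omega> = enumerate {i. X i \<omega> \<in> E} j"
definition "Zf i j (y :: nat \<Rightarrow> 'c) = (if (\<Sum>k<i. indicator E (y k)) = real j then 1 else (0::real))"
definition "Ind j i \<omega> = (if N i \<omega> = j then 1 else (0::real))"
definition "F j (g :: 'c \<Rightarrow> real) i \<omega> = Ind j i \<omega> * (indicator E (X i \<omega>) * g (X i \<omega>))"
definition "q j i = (\<integral>\<omega>. Ind j i \<omega> \<partial>M)"
definition "c (g :: 'c \<Rightarrow> real) = (\<integral>\<omega>. indicator E (X 0 \<omega>) * g (X 0 \<omega>) \<partial>M)"

lemma Zf_meas[measurable]: "Zf i j \<in> borel_measurable (PiM {..<i} (\<lambda>_. borel))"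
  unfolding Zf_def by measurable

lemma Ind_eq: "Ind j i \<omega> = Zf i j (restrict (\<lambda>k. X k \<omega>) {..<i})"
proof -
  have "(\<Sum>k<i. indicator E (restrict (\<lambda>k. X k \<omega>) {..<i} k)) = (\<Sum>k<i. indicator E (X k \<omega>) :: real)"
    by (rule sum.cong) auto
  also have "\<dots> = real (N i \<omega>)"
    unfolding N_def real_card_lessThan_filter by (rule sum.cong) (auto simp: indicator_def)
  finally show ?thesis unfolding Ind_def Zf_def by simp
qed

lemma Ind_meas[measurable]: "Ind j i \<in> borel_measurable M"
  unfolding Ind_eq[abs_def] by measurable

lemma Ind_int: "integrable M (Ind j i)"
  by (rule integrable_const_bound[where B=1]) (auto simp: Ind_def)

lemma T_meas[measurable]: "T j \<in> measurable M (count_space UNIV)"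
  unfolding T_def[abs_def] by (rule measurable_enumerate) simp

lemma XT_meas:
  assumes [measurable]: "g \<in> borel_measurable borel"
  shows "(\<lambda>\<omega>. g (X (T j \<omega>) \<omega>)) \<in> borel_measurable M"
  by (rule measurable_compose_countable[where f="\<lambda>i \<omega>. g (X i \<omega>)" and g="T j"]) auto

lemma F_single:
  assumes "infinite {i. X i \<omega> \<in> E}"
  shows "F j g i \<omega> = (if i = T j \<omega> then g (X (T j \<omega>) \<omega>) else 0)"
  using enumerate_eq_iff[OF assms, of j i]
  by (auto simp: F_def Ind_def T_def N_def indicator_def)

lemma F_integral:
  fixes g :: "'c \<Rightarrow> real"
  assumes [measurable]: "g \<in> borel_measurable borel" and ig: "integrable M (\<lambda>\<omega>. g (X 0 \<omega>))"
  shows "integrable M (F j g i)" and "(\<integral>\<omega>. F j g i \<omega> \<partial>M) = q j i * c g"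
proof -
  have W: "integrable M (\<lambda>\<omega>. indicator E (X i \<omega>) * g (X i \<omega>))"
  proof -
    have "integrable M (\<lambda>\<omega>. indicator E (X 0 \<omega>) * g (X 0 \<omega>))"
      by (rule Bochner_Integration.integrable_bound[OF ig]) (auto simp: indicator_def)
    then show ?thesis using transfer(1)[of "\<lambda>x. indicator E x * g x" i] by simp
  qed
  have "(\<integral>\<omega>. F j g i \<omega> \<partial>M) = (\<integral>\<omega>. Zf i j (restrict (\<lambda>k. X k \<omega>) {..<i}) * (indicator E (X i \<omega>) * g (X i \<omega>)) \<partial>M)"
    unfolding F_def Ind_eq ..
  also have "\<dots> = q j i * (\<integral>\<omega>. indicator E (X i \<omega>) * g (X i \<omega>) \<partial>M)"
    using indep_integral(1)[where Z="Zf i j" and W="\<lambda>x. indicator E x * g x" and i=i, OF Zf_meas _ _ W] Ind_int[of j i]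
    unfolding q_def Ind_eq[abs_def] by simp
  also have "\<dots> = q j i * c g"
    unfolding c_def using transfer(2)[of "\<lambda>x. indicator E x * g x" i] by simp
  finally show "(\<integral>\<omega>. F j g i \<omega> \<partial>M) = q j i * c g" .
  show "integrable M (F j g i)"
    using indep_integral(2)[where Z="Zf i j" and W="\<lambda>x. indicator E x * g x" and i=i, OF Zf_meas _ _ W] Ind_int[of j i]
    unfolding F_def Ind_eq[abs_def] by simp
qed

lemma q_nonneg: "0 \<le> q j i"
  unfolding q_def by (rule Bochner_Integration.integral_nonneg) (auto simp: Ind_def)

lemma c_one: "c (\<lambda>_. 1) = p"
proof -
  have "c (\<lambda>_. 1) = (\<integral>\<omega>. indicator {\<omega>\<in>space M. X 0 \<omega> \<in> E} \<omega> \<partial>M)"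
    unfolding c_def by (rule Bochner_Integration.integral_cong) (auto simp: indicator_def)
  also have "\<dots> = p" unfolding p_def by (simp add: Int_absorb2)
  finally show ?thesis .
qed

lemma q_summable: "summable (q j)"
proof (rule summableI_nonneg_bounded[where x="1/p"])
  show "0 \<le> q j i" for i by (rule q_nonneg)
  fix n
  have p0: "0 < p" using ppos unfolding p_def .
  have "(\<Sum>i<n. q j i) * p = (\<Sum>i<n. \<integral>\<omega>. F j (\<lambda>_. 1) i \<omega> \<partial>M)"
    by (simp add: sum_distrib_right F_integral(2) c_one)
  also have "\<dots> = (\<integral>\<omega>. (\<Sum>i<n. F j (\<lambda>_. 1) i \<omega>) \<partial>M)"
    by (rule Bochner_Integration.integral_sum[symmetric]) (auto intro: F_integral(1))
  also have "\<dots> \<le> (\<integral>\<omega>. 1 \<partial>M)"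
  proof (rule integral_mono_AE)
    show "integrable M (\<lambda>\<omega>. \<Sum>i<n. F j (\<lambda>_. 1) i \<omega>)"
      by (auto intro!: Bochner_Integration.integrable_sum F_integral(1))
    show "AE \<omega> in M. (\<Sum>i<n. F j (\<lambda>_. 1) i \<omega>) \<le> 1"
      using AE_infinite
    proof eventually_elim
      case (elim \<omega>)
      then show ?case by (simp add: F_single[OF elim])
    qed
  qed simp
  also have "\<dots> = 1" by (simp add: prob_space)
  finally show "(\<Sum>i<n. q j i) \<le> 1/p" using p0 by (simp add: field_simps)
qed

lemma main0:
  fixes g :: "'c \<Rightarrow> real"
  assumes gm[measurable]: "g \<in> borel_measurable borel" and ig: "integrable M (\<lambda>\<omega>. g (X 0 \<omega>))"
  shows "integrable M (\<lambda>\<omega>. g (X (T j \<omega>) \<omega>))"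
    and "(\<integral>\<omega>. g (X (T j \<omega>) \<omega>) \<partial>M) = suminf (q j) * c g"
proof -
  have int: "integrable M (F j g i)" for i using F_integral(1)[OF gm ig] .
  have AEs: "AE \<omega> in M. summable (\<lambda>i. norm (F j g i \<omega>))"
    using AE_infinite
  proof eventually_elim
    case (elim \<omega>)
    have "(\<lambda>i. norm (if i = T j \<omega> then g (X (T j \<omega>) \<omega>) else 0)) =
          (\<lambda>i. if i = T j \<omega> then norm (g (X (T j \<omega>) \<omega>)) else 0)" by auto
    then show ?case unfolding F_single[OF elim]
      using sums_summable[OF sums_single[of "T j \<omega>" "\<lambda>_. norm (g (X (T j \<omega>) \<omega>))"]]
      by simp
  qed
  have ig': "integrable M (\<lambda>\<omega>. \<bar>g (X 0 \<omega>)\<bar>)" using ig by simp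
  have nF: "norm (F j g i \<omega>) = F j (\<lambda>x. \<bar>g x\<bar>) i \<omega>" for i \<omega>
    by (simp add: F_def Ind_def abs_mult indicator_def)
  have nFi: "(\<integral>\<omega>. norm (F j g i \<omega>) \<partial>M) = q j i * c (\<lambda>x. \<bar>g x\<bar>)" for i
    unfolding nF by (rule F_integral(2)) (auto simp: ig')
  have sn: "summable (\<lambda>i. \<integral>\<omega>. norm (F j g i \<omega>) \<partial>M)"
    unfolding nFi by (intro summable_mult2 q_summable)
  have AEeq: "AE \<omega> in M. g (X (T j \<omega>) \<omega>) = (\<Sum>i. F j g i \<omega>)"
    using AE_infinite
  proof eventually_elim
    case (elim \<omega>)
    show ?case unfolding F_single[OF elim]
      using sums_unique[OF sums_single[of "T j \<omega>" "\<lambda>_. g (X (T j \<omega>) \<omega>)"]] by simp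
  qed
  have iS: "integrable M (\<lambda>\<omega>. \<Sum>i. F j g i \<omega>)" by (rule integrable_suminf[OF int AEs sn])
  show "integrable M (\<lambda>\<omega>. g (X (T j \<omega>) \<omega>))"
    by (rule integrable_cong_AE_imp[OF iS XT_meas[OF gm]]) (use AEeq in \<open>eventually_elim, simp\<close>)
  have "(\<integral>\<omega>. g (X (T j \<omega>) \<omega>) \<partial>M) = (\<integral>\<omega>. (\<Sum>i. F j g i \<omega>) \<partial>M)"
    by (rule integral_cong_AE[OF XT_meas[OF gm] borel_measurable_integrable[OF iS] AEeq])
  also have "\<dots> = (\<Sum>i. \<integral>\<omega>. F j g i \<omega> \<partial>M)" by (rule integral_suminf[OF int AEs sn])
  also have "\<dots> = (\<Sum>i. q j i * c g)" unfolding F_integral(2)[OF gm ig] ..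
  also have "\<dots> = suminf (q j) * c g" by (rule suminf_mult2[symmetric, OF q_summable])
  finally show "(\<integral>\<omega>. g (X (T j \<omega>) \<omega>) \<partial>M) = suminf (q j) * c g" .
qed

lemma suminf_q: "suminf (q j) = 1 / p"
proof -
  have e1: "(\<integral>\<omega>. (\<lambda>_. 1::real) (X (T j \<omega>) \<omega>) \<partial>M) = suminf (q j) * c (\<lambda>_. 1)"
    by (rule main0(2)) simp_all
  have e2: "(\<integral>\<omega>. (\<lambda>_. 1::real) (X (T j \<omega>) \<omega>) \<partial>M) = 1" by (simp add: prob_space)
  have h1: "suminf (q j) * p = 1" using e1 e2 c_one by metis
  have p0: "0 < p" using ppos unfolding p_def .
  have "suminf (q j) = suminf (q j) * p / p" using p0 by simp
  also have "\<dots> = 1 / p" using h1 by simp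
  finally show ?thesis .
qed

lemma main:
  fixes g :: "'c \<Rightarrow> real"
  assumes gm[measurable]: "g \<in> borel_measurable borel" and ig: "integrable M (\<lambda>\<omega>. g (X 0 \<omega>))"
  shows "integrable M (\<lambda>\<omega>. g (X (T j \<omega>) \<omega>))"
    and "(\<integral>\<omega>. g (X (T j \<omega>) \<omega>) \<partial>M) = c g / p"
  using main0[OF gm ig, of j] suminf_q[of j] by simp_all

end


lemma fub:
  fixes f :: "'b::euclidean_space \<Rightarrow> 'a::euclidean_space \<Rightarrow> real" and g :: "'a \<Rightarrow> real"
    and Y :: "'m \<Rightarrow> 'b \<times> 'a"
  assumes D: "distributed M lborel Y (\<lambda>x. ennreal (f (fst x) (snd x)))" and f0: "\<And>s t. f s t \<ge> 0"
    and gm[measurable]: "g \<in> borel_measurable borel" and ig: "integrable M (\<lambda>\<omega>. g (snd (Y \<omega>)))"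
    and C[measurable]: "C \<in> sets borel"
  shows "integrable lborel (\<lambda>s. indicator C s * phi f g s)"
    and "(\<integral>\<omega>. indicator C (fst (Y \<omega>)) * g (snd (Y \<omega>)) \<partial>M) = (LINT s:C|lborel. phi f g s)"
proof -
  define G where "G x = indicator C (fst x) * g (snd x)" for x :: "'b \<times> 'a"
  define H where "H x = f (fst x) (snd x) * G x" for x :: "'b \<times> 'a"
  have Ym[measurable]: "Y \<in> measurable M borel" using distributed_measurable[OF D] by simp
  have Gm[measurable]: "G \<in> borel_measurable borel" unfolding G_def borel_prod[symmetric] by measurable
  have fe[measurable]: "(\<lambda>x. ennreal (f (fst x) (snd x))) \<in> borel_measurable borel"
    using distributed_borel_measurable[OF D] by simp
  have "(\<lambda>x. enn2real (ennreal (f (fst x) (snd x)))) \<in> borel_measurable borel" by measurable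
  then have fm[measurable]: "(\<lambda>x. f (fst x) (snd x)) \<in> borel_measurable borel" using f0 by simp
  have iG: "integrable M (\<lambda>\<omega>. G (Y \<omega>))"
  proof (rule Bochner_Integration.integrable_bound[OF ig])
    show "(\<lambda>\<omega>. G (Y \<omega>)) \<in> borel_measurable M" by measurable
  qed (auto simp: G_def indicator_def)
  have int1: "integrable lborel H"
    unfolding H_def using distributed_integrable[OF D, of G] iG f0 by simp
  have eq1: "(\<integral>\<omega>. G (Y \<omega>) \<partial>M) = integral\<^sup>L lborel H"
    unfolding H_def using distributed_integral[OF D, of G] f0 by simp
  have int2: "integrable (lborel \<Otimes>\<^sub>M lborel) H" using int1 by (simp add: lborel_prod)
  have inner: "(\<integral>t. H (s, t) \<partial>lborel) = indicator C s * phi f g s" for s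
  proof -
    have "(\<lambda>t. H (s, t)) = (\<lambda>t. indicator C s * (g t * f s t))"
      by (rule ext) (simp add: H_def G_def)
    then show ?thesis by (simp add: phi_def)
  qed
  show "integrable lborel (\<lambda>s. indicator C s * phi f g s)"
    using lborel_pair.integrable_fst'[OF int2] unfolding inner .
  have "(\<integral>\<omega>. G (Y \<omega>) \<partial>M) = (\<integral>s. (\<integral>t. H (s, t) \<partial>lborel) \<partial>lborel)"
    unfolding eq1 lborel_pair.integral_fst'[OF int2] by (simp add: lborel_prod)
  also have "\<dots> = (LINT s:C|lborel. phi f g s)"
    unfolding inner set_lebesgue_integral_def by simp
  finally show "(\<integral>\<omega>. indicator C (fst (Y \<omega>)) * g (snd (Y \<omega>)) \<partial>M) = (LINT s:C|lborel. phi f g s)"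
    unfolding G_def .
qed



theorem lemma1:
  fixes M :: "'m measure"
    and X :: "nat \<Rightarrow> 'm \<Rightarrow> 'b::euclidean_space \<times> 'a::euclidean_space"
    and f :: "'b \<Rightarrow> 'a \<Rightarrow> real"
    and h :: "'a \<Rightarrow> real"
  assumes "prob_space M"
    and "prob_space.indep_vars M (\<lambda>_. borel) X UNIV"
    and "\<And>i. distributed M lborel (X i) (\<lambda>x. ennreal (f (fst x) (snd x)))"
    and "\<And>s t. f s t \<ge> 0"
    and "h \<in> borel_measurable borel"
    and "integrable M (\<lambda>\<omega>. h (snd (X 0 \<omega>)))"
  shows "AE s in density lborel (\<lambda>s. ennreal (f_S f s)).
           cond_exp f h s = phi f h s / phi f (\<lambda>_. 1) s \<and>
           (\<forall>\<delta>>0. \<forall>n\<ge>1.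
              (\<integral>\<omega>. Y_abc X h s \<delta> n \<omega> \<partial>M) = (\<integral>\<omega>. h (theta_abc X s \<delta> 0 \<omega>) \<partial>M) \<and>
              (\<integral>\<omega>. h (theta_abc X s \<delta> 0 \<omega>) \<partial>M) = phi_delta f h s \<delta> / phi_delta f (\<lambda>_. 1) s \<delta>)"
proof -
  interpret P: prob_space M by fact
  note D = assms(3)
  note f0 = assms(4)
  have hm[measurable]: "h \<in> borel_measurable borel" by fact
  have Xm[measurable]: "X i \<in> measurable M borel" for i using distributed_measurable[OF D[of i]] by simp
  have idd: "distr M borel (X i) = distr M borel (X 0)" for i
  proof -
    have "distr M borel (X i) = distr M lborel (X i)" by (rule distr_cong) auto
    also have "\<dots> = distr M lborel (X 0)" using distributed_distr_eq_density[OF D[of i]] distributed_distr_eq_density[OF D[of 0]] by simp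
    also have "\<dots> = distr M borel (X 0)" by (rule distr_cong) auto
    finally show ?thesis .
  qed
  have fe[measurable]: "(\<lambda>x. ennreal (f (fst x) (snd x))) \<in> borel_measurable borel"
    using distributed_borel_measurable[OF D[of 0]] by simp
  have "(\<lambda>x. enn2real (ennreal (f (fst x) (snd x)))) \<in> borel_measurable borel" by measurable
  then have fm: "(\<lambda>x. f (fst x) (snd x)) \<in> borel_measurable borel" using f0 by simp
  then have "case_prod f \<in> borel_measurable (lborel \<Otimes>\<^sub>M lborel)"
    unfolding lborel_prod by (simp add: case_prod_beta')
  then have fSm[measurable]: "(\<lambda>s. f_S f s) \<in> borel_measurable borel"
    unfolding f_S_def using lborel.borel_measurable_lebesgue_integral[of f lborel] by simp
  have fS0: "0 \<le> f_S f s" for s unfolding f_S_def by (rule Bochner_Integration.integral_nonneg) (simp add: f0)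
  have phi1: "phi f (\<lambda>_. 1) s = f_S f s" for s by (simp add: phi_def f_S_def)
  define \<nu> where "\<nu> = density lborel (\<lambda>s. ennreal (f_S f s))"
  have posAE: "AE s in \<nu>. \<forall>\<delta>>0. 0 < emeasure \<nu> (cball s \<delta>)"
    by (rule AE_pos_cball) (simp add: \<nu>_def)
  have cond: "cond_exp f h s = phi f h s / phi f (\<lambda>_. 1) s" for s
  proof (cases "f_S f s > 0")
    case True
    have "(\<lambda>t. h t * cond_dens f t s) = (\<lambda>t. (h t * f s t) / f_S f s)"
      using True by (simp add: cond_dens_def)
    then have "cond_exp f h s = (\<integral>t. h t * f s t \<partial>lborel) / f_S f s"
      unfolding cond_exp_def by simp
    then show ?thesis unfolding phi1 by (simp add: phi_def)
  next
    case False
    then have "f_S f s = 0" using fS0[of s] by simp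
    then show ?thesis by (simp add: cond_exp_def cond_dens_def phi1)
  qed
  show ?thesis unfolding \<nu>_def[symmetric]
  proof (rule eventually_mono[OF posAE], intro conjI allI impI)
    fix s assume pos: "\<forall>\<delta>>0. 0 < emeasure \<nu> (cball s \<delta>)"
    show "cond_exp f h s = phi f h s / phi f (\<lambda>_. 1) s" by (rule cond)
    fix \<delta> :: real and n :: nat assume d: "0 < \<delta>" and n: "1 \<le> n"
    define E where "E = {x :: 'b \<times> 'a. norm (fst x - s) \<le> \<delta>}"
    have "E = fst -` cball s \<delta> \<inter> space (borel \<Otimes>\<^sub>M borel)"
      by (auto simp: E_def dist_norm norm_minus_commute space_pair_measure)
    also have "\<dots> \<in> sets (borel \<Otimes>\<^sub>M borel)"
      by (rule measurable_sets[OF measurable_fst]) simp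
    finally have Eb[measurable]: "E \<in> sets borel" unfolding borel_prod .
    have indE: "indicator E x = indicator (cball s \<delta>) (fst x)" for x
      by (simp add: E_def indicator_def dist_norm norm_minus_commute)
    have C[measurable]: "cball s \<delta> \<in> sets borel" by simp
    have c1: "integrable M (\<lambda>\<omega>. (\<lambda>_. 1::real) (snd (X 0 \<omega>)))" by simp
    have one_m: "(\<lambda>_. 1::real) \<in> borel_measurable borel" by simp
    have Lp: "P.prob {\<omega>\<in>space M. X 0 \<omega> \<in> E} = (LINT s':cball s \<delta>|lborel. phi f (\<lambda>_. 1) s')"
    proof -
      have "(\<integral>\<omega>. indicator (cball s \<delta>) (fst (X 0 \<omega>)) * (\<lambda>_. 1::real) (snd (X 0 \<omega>)) \<partial>M)
          = (\<integral>\<omega>. indicator {\<omega>\<in>space M. X 0 \<omega> \<in> E} \<omega> \<partial>M)"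
        by (rule Bochner_Integration.integral_cong) (auto simp: E_def indicator_def dist_norm norm_minus_commute)
      also have "\<dots> = P.prob {\<omega>\<in>space M. X 0 \<omega> \<in> E}" by (simp add: Int_absorb2)
      finally show ?thesis using fub(2)[OF D[of 0] f0 one_m c1 C] by simp
    qed
    have Lh: "(\<integral>\<omega>. indicator E (X 0 \<omega>) * h (snd (X 0 \<omega>)) \<partial>M) = (LINT s':cball s \<delta>|lborel. phi f h s')"
      unfolding indE using fub(2)[OF D[of 0] f0 hm assms(6) C] .
    have intp1: "integrable lborel (\<lambda>s'. indicator (cball s \<delta>) s' * f_S f s')"
      using fub(1)[OF D[of 0] f0 one_m c1 C] unfolding phi1 .
    have em: "emeasure \<nu> (cball s \<delta>) = ennreal (LINT s':cball s \<delta>|lborel. phi f (\<lambda>_. 1) s')"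
    proof -
      have "emeasure \<nu> (cball s \<delta>) = (\<integral>\<^sup>+x. ennreal (f_S f x) * indicator (cball s \<delta>) x \<partial>lborel)"
        unfolding \<nu>_def by (rule emeasure_density) auto
      also have "\<dots> = (\<integral>\<^sup>+x. ennreal (indicator (cball s \<delta>) x * f_S f x) \<partial>lborel)"
        by (rule nn_integral_cong) (simp add: indicator_def)
      also have "\<dots> = ennreal (\<integral>x. indicator (cball s \<delta>) x * f_S f x \<partial>lborel)"
        by (rule nn_integral_eq_integral[OF intp1]) (simp add: fS0)
      also have "\<dots> = ennreal (LINT s':cball s \<delta>|lborel. phi f (\<lambda>_. 1) s')"
        by (simp add: set_lebesgue_integral_def phi1)
      finally show ?thesis .
    qed
    have ppos: "0 < P.prob {\<omega>\<in>space M. X 0 \<omega> \<in> E}"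
      using pos d em Lp by (metis ennreal_less_zero_iff)
    have "abc M X E"
    proof (intro abc.intro abc_axioms.intro)
      show "prob_space M" by fact
      show "P.indep_vars (\<lambda>_. borel) X UNIV" by (rule assms(2))
      show "distr M borel (X i) = distr M borel (X 0)" for i by (rule idd)
    qed (use Eb ppos in auto)
    interpret A: abc M X E by fact
    have th: "theta_abc X s \<delta> j \<omega> = snd (X (A.T j \<omega>) \<omega>)" for j \<omega>
      unfolding theta_abc_def acc_set_def A.T_def by (simp add: E_def)
    have gm: "(\<lambda>x. h (snd x)) \<in> borel_measurable (borel :: ('b \<times> 'a) measure)"
      unfolding borel_prod[symmetric] by measurable
    have ig: "integrable M (\<lambda>\<omega>. (\<lambda>x. h (snd x)) (X 0 \<omega>))" using assms(6) by simp
    have cg: "A.c (\<lambda>x. h (snd x)) = (LINT s':cball s \<delta>|lborel. phi f h s')"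
      unfolding A.c_def using Lh by simp
    have pp: "A.p = (LINT s':cball s \<delta>|lborel. phi f (\<lambda>_. 1) s')"
      unfolding A.p_def using Lp .
    define K where "K = (LINT s':cball s \<delta>|lborel. phi f h s') / (LINT s':cball s \<delta>|lborel. phi f (\<lambda>_. 1) s')"
    have intj: "integrable M (\<lambda>\<omega>. h (theta_abc X s \<delta> j \<omega>))" for j
      using A.main(1)[OF gm ig, of j] unfolding th by simp
    have eqj: "(\<integral>\<omega>. h (theta_abc X s \<delta> j \<omega>) \<partial>M) = K" for j
      using A.main(2)[OF gm ig, of j] unfolding th cg pp K_def by simp
    have V: "0 < measure lborel (cball s \<delta>)" using content_cball_pos[OF d] .
    have pd: "phi_delta f h s \<delta> / phi_delta f (\<lambda>_. 1) s \<delta> = K"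
      unfolding phi_delta_def K_def using V by simp
    have "(\<integral>\<omega>. Y_abc X h s \<delta> n \<omega> \<partial>M) = (\<integral>\<omega>. (\<Sum>j<n. h (theta_abc X s \<delta> j \<omega>)) \<partial>M) / real n"
      unfolding Y_abc_def[abs_def] by simp
    also have "\<dots> = (\<Sum>j<n. \<integral>\<omega>. h (theta_abc X s \<delta> j \<omega>) \<partial>M) / real n"
      by (subst Bochner_Integration.integral_sum) (auto intro: intj)
    also have "\<dots> = K" using n by (simp add: eqj)
    finally show "(\<integral>\<omega>. Y_abc X h s \<delta> n \<omega> \<partial>M) = (\<integral>\<omega>. h (theta_abc X s \<delta> 0 \<omega>) \<partial>M)"
      using eqj[of 0] by simp
    show "(\<integral>\<omega>. h (theta_abc X s \<delta> 0 \<omega>) \<partial>M) = phi_delta f h s \<delta> / phi_delta f (\<lambda>_. 1) s \<delta>"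
      using eqj[of 0] pd by simp
  qed
qed


end
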